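(* Let $A$ be a real symmetric $n\times n$ matrix and $Z=\{{\bf z}_1,\dots,{\bf z}_s\}\subset\mathbb{R}^n$. Then the extended walk matrix $\widetilde W(A,Z)$ has rank $n$ if and only if the real linear span of $P(A,Z)$ equals $\mathbb{R}^{n\times n}$.
   Context: The extended walk matrix is the $n\times (ns)$ matrix $\widetilde W(A,Z):=[{\bf z}_1, A{\bf z}_1,\dots,A^{n-1}{\bf z}_1,\dots,{\bf z}_s, A{\bf z}_s,\dots,A^{n-1}{\bf z}_s]$. The set $P(A,Z):=\{A^m{\bf z}_k{\bf z}_j^TA^\ell : 1\le k,j\le s,\ 0\le m,\ell\le n-1\}$. *)

theory Defs
  imports "HOL-Analysis.Analysis"
begin

primrec matpow :: "real^'n^'n \<Rightarrow> nat \<Rightarrow> real^'n^'n" where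
  "matpow A 0 = mat 1"
| "matpow A (Suc m) = A ** matpow A m"

definition outer :: "real^'n \<Rightarrow> real^'n \<Rightarrow> real^'n^'n" where
  "outer z w = (\<chi> i j. z $ i * w $ j)"

text \<open>Column j (0-based, j < n*s) of the extended walk matrix
  [z_1, A z_1, ..., A^(n-1) z_1, ..., z_s, ..., A^(n-1) z_s], with z indexed 1..s.\<close>
definition ext_walk_col :: "real^'n^'n \<Rightarrow> (nat \<Rightarrow> real^'n) \<Rightarrow> nat \<Rightarrow> real^'n" where
  "ext_walk_col A z j = matpow A (j mod CARD('n)) *v z (j div CARD('n) + 1)"

definition ext_walk_rank :: "real^'n^'n \<Rightarrow> (nat \<Rightarrow> real^'n) \<Rightarrow> nat \<Rightarrow> nat" where
  "ext_walk_rank A z s = dim {ext_walk_col A z j | j. j < CARD('n) * s}"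

definition P_set :: "real^'n^'n \<Rightarrow> (nat \<Rightarrow> real^'n) \<Rightarrow> nat \<Rightarrow> (real^'n^'n) set" where
  "P_set A z s = {matpow A m ** outer (z k) (z j) ** matpow A l | k j m l.
      k \<in> {1..s} \<and> j \<in> {1..s} \<and> m < CARD('n) \<and> l < CARD('n)}"

end

theory Submission
  imports Defs
begin

lemma matpow_comm: "matpow A l ** A = A ** matpow A l"
  by (induction l) (simp_all add: matrix_mul_assoc[symmetric])

lemma matpow_sym: "transpose A = A \<Longrightarrow> transpose (matpow A l) = matpow A l"
  by (induction l) (simp_all add: matrix_transpose_mul matpow_comm)

lemma outer_mult: "M ** outer a b ** N = outer (M *v a) (transpose N *v b)"
  by (simp add: vec_eq_iff outer_def matrix_matrix_mult_def matrix_vector_mult_def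
      transpose_def sum_distrib_left sum_distrib_right mult_ac)

lemma outer_mv: "outer u v *v x = scaleR (v \<bullet> x) u"
  by (simp add: vec_eq_iff outer_def matrix_vector_mult_def inner_vec_def
      sum_distrib_left mult_ac)

lemma linear_outer2: "linear (\<lambda>v. outer u v)"
  by (rule linearI) (simp_all add: vec_eq_iff outer_def algebra_simps)

lemma linear_outer1: "linear (\<lambda>u. outer u v)"
  by (rule linearI) (simp_all add: vec_eq_iff outer_def algebra_simps)

lemma outer_simps1: "outer 0 v = 0" "outer (x + y) v = outer x v + outer y v"
  "outer (scaleR c x) v = scaleR c (outer x v)"
  by (simp_all add: vec_eq_iff outer_def algebra_simps)

lemma outer_simps2: "outer u 0 = 0" "outer u (x + y) = outer u x + outer u y"
  "outer u (scaleR c x) = scaleR c (outer u x)"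
  by (simp_all add: vec_eq_iff outer_def algebra_simps)

lemma matrix_decomp:
  "(M::real^'n^'n) = (\<Sum>i\<in>UNIV. \<Sum>j\<in>UNIV. outer (scaleR (M$i$j) (axis i 1)) (axis j 1))"
proof -
  have inner: "(\<Sum>j\<in>UNIV. M$i$j * (if a = i then 1 else 0) * (if b = j then 1 else 0)) = (if a = i then M$i$b else 0)" for a b i
    by (cases "a = i") (simp_all add: if_distrib[of "\<lambda>t. _ * t"] cong: if_cong)
  show ?thesis by (simp add: vec_eq_iff outer_def axis_def inner)
qed

theorem lemma3p4:
  fixes A :: "real^'n^'n" and z :: "nat \<Rightarrow> real^'n" and s :: nat
  assumes "transpose A = A"
  shows "ext_walk_rank A z s = CARD('n) \<longleftrightarrow> span (P_set A z s) = UNIV"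
proof -
  define W where "W = {ext_walk_col A z j | j. j < CARD('n) * s}"
  have W: "W = {matpow A m *v z k | k m. k \<in> {1..s} \<and> m < CARD('n)}"
  proof (rule set_eqI, rule iffI)
    fix x assume "x \<in> W"
    then obtain j where j: "j < CARD('n) * s" "x = ext_walk_col A z j" unfolding W_def by blast
    have "j div CARD('n) < s" using j(1) by (simp add: less_mult_imp_div_less mult.commute)
    then show "x \<in> {matpow A m *v z k | k m. k \<in> {1..s} \<and> m < CARD('n)}"
      using j unfolding ext_walk_col_def by force
  next
    fix x assume "x \<in> {matpow A m *v z k | k m. k \<in> {1..s} \<and> m < CARD('n)}"
    then obtain k m where km: "k \<in> {1..s}" "m < CARD('n)" "x = matpow A m *v z k" by blast
    define j where "j = (k - 1) * CARD('n) + m"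
    have "j < CARD('n) * s"
    proof -
      have "(k - 1) * CARD('n) + m < (k - 1) * CARD('n) + CARD('n)" using km by simp
      also have "\<dots> = k * CARD('n)" using km by (cases k) auto
      also have "\<dots> \<le> s * CARD('n)" using km by simp
      finally show ?thesis unfolding j_def by (simp add: mult.commute)
    qed
    moreover have "j mod CARD('n) = m" "j div CARD('n) + 1 = k" using km unfolding j_def by auto
    ultimately show "x \<in> W" unfolding W_def ext_walk_col_def using km by force
  qed
  have P: "P_set A z s = {outer u v | u v. u \<in> W \<and> v \<in> W}"
    unfolding P_set_def W
    by (auto simp: outer_mult matpow_sym[OF assms]; metis)
  have rank: "ext_walk_rank A z s = CARD('n) \<longleftrightarrow> span W = UNIV"
    unfolding ext_walk_rank_def W_def[symmetric]
    using dim_eq_full[of W] by simp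
  show ?thesis unfolding rank
  proof
    assume sW: "span W = UNIV"
    have uv: "outer u v \<in> span (P_set A z s)" for u v
    proof -
      have "u \<in> span W" using sW by simp
      moreover have "subspace {u. \<forall>v. outer u v \<in> span (P_set A z s)}"
        unfolding subspace_def
        by (auto simp: outer_simps1 intro: span_add span_scale span_zero)
      moreover have "W \<subseteq> {u. \<forall>v. outer u v \<in> span (P_set A z s)}"
      proof (intro subsetI CollectI allI)
        fix u v assume u: "u \<in> W"
        have "v \<in> span W" using sW by simp
        moreover have "subspace ((\<lambda>v. outer u v) -` span (P_set A z s))"
          unfolding subspace_def by (auto simp: outer_simps2 intro: span_add span_scale span_zero)
        moreover have "W \<subseteq> (\<lambda>v. outer u v) -` span (P_set A z s)"
          using u by (auto simp: P intro: span_base)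
        ultimately show "outer u v \<in> span (P_set A z s)"
          using span_minimal by blast
      qed
      ultimately show ?thesis using span_minimal by blast
    qed
    show "span (P_set A z s) = UNIV"
    proof (rule set_eqI, simp)
      fix M :: "real^'n^'n"
      show "M \<in> span (P_set A z s)"
        by (subst matrix_decomp) (intro span_sum uv)
    qed
  next
    assume sP: "span (P_set A z s) = UNIV"
    show "span W = UNIV"
    proof (rule ccontr)
      assume ne: "span W \<noteq> UNIV"
      have dl: "dim W < DIM(real^'n)"
        using dim_subset_UNIV[of W] dim_eq_full[of W] ne by linarith
      then obtain x where x: "x \<noteq> 0" "\<And>y. y \<in> span W \<Longrightarrow> orthogonal x y"
        using orthogonal_to_subspace_exists[OF dl] by blast
      define S where "S = {M :: real^'n^'n. x \<bullet> (M *v x) = 0}"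
      have "subspace S" unfolding S_def subspace_def
        by (simp add: matrix_vector_mult_add_rdistrib scaleR_matrix_vector_assoc[symmetric] inner_add_right)
      moreover have "P_set A z s \<subseteq> S"
        unfolding P S_def using x(2) span_base[of _ W]
        by (auto simp: outer_mv orthogonal_def inner_commute)
      ultimately have "span (P_set A z s) \<subseteq> S" using span_minimal by blast
      then have "outer x x \<in> S" using sP by auto
      then have "(x \<bullet> x) * (x \<bullet> x) = 0" by (simp add: S_def outer_mv inner_commute)
      then show False using x(1) by simp
    qed
  qed
qed

end
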